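(* Let $(X,\phi)$ be a uniformly Lipschitz flow on a compact metric space $(X,d)$, let $L=L(1)$, and let $\mu\in\mathcal{M}(X)$. Then for every $\epsilon>0$ and every $x\in X$, \begin{align*} \overline{h}^{BK}_\mu(\phi_1,x,\epsilon)\le\overline{h}^{BK}_\mu(\phi,x,\epsilon)\le\overline{h}^{BK}_\mu(\phi_1,x,\epsilon/L),\\ \underline{h}^{BK}_\mu(\phi_1,x,\epsilon)\le\underline{h}^{BK}_\mu(\phi,x,\epsilon)\le\underline{h}^{BK}_\mu(\phi_1,x,\epsilon/L). \end{align*}
   Context: A flow: $\phi:X\times\mathbb{R}\to X$ continuous, $\phi_t(x)=\phi(x,t)$, $\phi_0=\mathrm{id}$, $\phi_{t+s}=\phi_t\circ\phi_s$. Uniformly Lipschitz: for every $t_0>0$ there is $L(t_0)>0$ such that for all $\epsilon>0$ and $x,y\in X$, $d(x,y)\le\epsilon/L(t_0)$ implies $d(\phi_sx,\phi_sy)<\epsilon$ for all $s\in[0,t_0]$. $\mathcal{M}(X)$: Borel probability measures on $X$. Balls: $B_t(x,\epsilon,\phi)=\{y:d(\phi_sx,\phi_sy)<\epsilon\ \forall s\in[0,t]\}$, $B_n(x,\epsilon,\phi_1)=\{y:d(\phi_jx,\phi_jy)<\epsilon,\ j=0,\dots,n-1\}$. Local entropies: $\overline{h}^{BK}_\mu(\phi,x,\epsilon)=\limsup_{t\to\infty}-\frac1t\log\mu(B_t(x,\epsilon,\phi))$, $\underline{h}^{BK}_\mu(\phi,x,\epsilon)=\liminf_{t\to\infty}-\frac1t\log\mu(B_t(x,\epsilon,\phi))$,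 and $\overline{h}^{BK}_\mu(\phi_1,x,\epsilon)$, $\underline{h}^{BK}_\mu(\phi_1,x,\epsilon)$ are the $\limsup$, $\liminf$ over $n\in\mathbb{N}$, $n\to\infty$, of $-\frac1n\log\mu(B_n(x,\epsilon,\phi_1))$. *)

theory Defs
  imports "HOL-Probability.Probability"
begin

definition is_flow :: "'a::metric_space set \<Rightarrow> (real \<Rightarrow> 'a \<Rightarrow> 'a) \<Rightarrow> bool" where
  "is_flow X \<phi> \<longleftrightarrow>
     continuous_on (X \<times> UNIV) (\<lambda>(x, t). \<phi> t x) \<and>
     (\<forall>t. \<phi> t ` X \<subseteq> X) \<and>
     (\<forall>x\<in>X. \<phi> 0 x = x) \<and>
     (\<forall>x\<in>X. \<forall>t s. \<phi> (t + s) x = \<phi> t (\<phi> s x))"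

definition unif_lipschitz_flow ::
  "'a::metric_space set \<Rightarrow> (real \<Rightarrow> 'a \<Rightarrow> 'a) \<Rightarrow> (real \<Rightarrow> real) \<Rightarrow> bool" where
  "unif_lipschitz_flow X \<phi> L \<longleftrightarrow>
     (\<forall>t0>0. L t0 > 0 \<and>
        (\<forall>\<epsilon>>0. \<forall>x\<in>X. \<forall>y\<in>X. dist x y \<le> \<epsilon> / L t0 \<longrightarrow>
            (\<forall>s\<in>{0..t0}. dist (\<phi> s x) (\<phi> s y) < \<epsilon>)))"

definition bowen_ball_flow ::
  "'a::metric_space set \<Rightarrow> (real \<Rightarrow> 'a \<Rightarrow> 'a) \<Rightarrow> real \<Rightarrow> 'a \<Rightarrow> real \<Rightarrow> 'a set" where
  "bowen_ball_flow X \<phi> t x \<epsilon> = {y\<in>X. \<forall>s\<in>{0..t}. dist (\<phi> s x) (\<phi> s y) < \<epsilon>}"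

definition bowen_ball_map ::
  "'a::metric_space set \<Rightarrow> ('a \<Rightarrow> 'a) \<Rightarrow> nat \<Rightarrow> 'a \<Rightarrow> real \<Rightarrow> 'a set" where
  "bowen_ball_map X f n x \<epsilon> = {y\<in>X. \<forall>j<n. dist ((f ^^ j) x) ((f ^^ j) y) < \<epsilon>}"

definition neg_log_rate :: "'a measure \<Rightarrow> 'a set \<Rightarrow> real \<Rightarrow> ereal" where
  "neg_log_rate M B t = (if measure M B = 0 then \<infinity> else ereal (- ln (measure M B) / t))"

definition upper_BK_flow ::
  "'a::metric_space set \<Rightarrow> 'a measure \<Rightarrow> (real \<Rightarrow> 'a \<Rightarrow> 'a) \<Rightarrow> 'a \<Rightarrow> real \<Rightarrow> ereal" where
  "upper_BK_flow X M \<phi> x \<epsilon> = Limsup at_top (\<lambda>t::real. neg_log_rate M (bowen_ball_flow X \<phi> t x \<epsilon>) t)"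

definition lower_BK_flow ::
  "'a::metric_space set \<Rightarrow> 'a measure \<Rightarrow> (real \<Rightarrow> 'a \<Rightarrow> 'a) \<Rightarrow> 'a \<Rightarrow> real \<Rightarrow> ereal" where
  "lower_BK_flow X M \<phi> x \<epsilon> = Liminf at_top (\<lambda>t::real. neg_log_rate M (bowen_ball_flow X \<phi> t x \<epsilon>) t)"

definition upper_BK_map ::
  "'a::metric_space set \<Rightarrow> 'a measure \<Rightarrow> ('a \<Rightarrow> 'a) \<Rightarrow> 'a \<Rightarrow> real \<Rightarrow> ereal" where
  "upper_BK_map X M f x \<epsilon> = Limsup sequentially (\<lambda>n. neg_log_rate M (bowen_ball_map X f n x \<epsilon>) (real n))"

definition lower_BK_map ::
  "'a::metric_space set \<Rightarrow> 'a measure \<Rightarrow> ('a \<Rightarrow> 'a) \<Rightarrow> 'a \<Rightarrow> real \<Rightarrow> ereal" where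
  "lower_BK_map X M f x \<epsilon> = Liminf sequentially (\<lambda>n. neg_log_rate M (bowen_ball_map X f n x \<epsilon>) (real n))"

end

theory Submission
  imports Defs
begin

lemma Limsup_filter_mono: "F \<le> G \<Longrightarrow> Limsup F f \<le> Limsup G (f::_\<Rightarrow>'b::complete_linorder)"
  unfolding Limsup_def by (rule INF_superset_mono) (auto simp: le_filter_def)

lemma Liminf_filter_mono: "F \<le> G \<Longrightarrow> Liminf G f \<le> Liminf F (f::_\<Rightarrow>'b::complete_linorder)"
  unfolding Liminf_def by (rule SUP_subset_mono) (auto simp: le_filter_def)

lemma filtermap_real_le: "filtermap real sequentially \<le> at_top"
  using filterlim_real_sequentially unfolding filterlim_def by simp

lemma f1: "filterlim (\<lambda>t::real. nat \<lfloor>t\<rfloor> + 1) sequentially at_top"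
  unfolding filterlim_at_top eventually_at_top_linorder
proof
  fix Z :: nat
  show "\<exists>N. \<forall>x::real\<ge>N. Z \<le> nat \<lfloor>x\<rfloor> + 1"
  proof (rule exI[of _ "real Z"], intro allI impI)
    fix x :: real assume "real Z \<le> x"
    then have "int Z \<le> \<lfloor>x\<rfloor>" by (simp add: le_floor_iff)
    then show "Z \<le> nat \<lfloor>x\<rfloor> + 1" by linarith
  qed
qed

lemma f2: "filterlim (\<lambda>t::real. nat \<lceil>t\<rceil>) sequentially at_top"
  unfolding filterlim_at_top eventually_at_top_linorder
proof
  fix Z :: nat
  show "\<exists>N. \<forall>x::real\<ge>N. Z \<le> nat \<lceil>x\<rceil>"
  proof (rule exI[of _ "real Z"], intro allI impI)
    fix x :: real assume "real Z \<le> x"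
    then have "int Z \<le> \<lceil>x\<rceil>" using ceiling_mono[of "real Z" x] by simp
    then show "Z \<le> nat \<lceil>x\<rceil>" by linarith
  qed
qed

lemma nlr_mono:
  assumes "prob_space M" "A \<subseteq> B" "B \<in> sets M" "0 < t" "t \<le> t'"
  shows "neg_log_rate M B t' \<le> neg_log_rate M A t"
proof (cases "measure M A = 0")
  case True
  then show ?thesis by (simp add: neg_log_rate_def)
next
  case False
  interpret prob_space M by fact
  have mA: "measure M A > 0" using False measure_nonneg[of M A] by linarith
  have mAB: "measure M A \<le> measure M B"
    using finite_measure_mono[OF assms(2,3)] .
  have mB1: "measure M B \<le> 1" by (rule prob_le_1)
  have "ln (measure M A) \<le> ln (measure M B)" using mA mAB by simp
  moreover have "ln (measure M B) \<le> 0" using mA mAB mB1 by simp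
  ultimately have 1: "- ln (measure M B) / t' \<le> - ln (measure M A) / t'"
    using assms(4,5) by (intro divide_right_mono) auto
  have 2: "- ln (measure M A) / t' \<le> - ln (measure M A) / t"
    using assms(4,5) \<open>ln (measure M A) \<le> ln (measure M B)\<close> \<open>ln (measure M B) \<le> 0\<close>
    by (intro divide_left_mono) auto
  have "measure M B \<noteq> 0" using mA mAB by linarith
  then show ?thesis using False 1 2 by (simp add: neg_log_rate_def)
qed

lemma nlr_nonneg:
  assumes "prob_space M" "0 < t"
  shows "0 \<le> neg_log_rate M B t"
proof (cases "measure M B = 0")
  case True
  then show ?thesis by (simp add: neg_log_rate_def)
next
  case False
  interpret prob_space M by fact
  have mA: "measure M B > 0" using False measure_nonneg[of M B] by linarith
  have "measure M B \<le> 1" by (rule prob_le_1)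
  then have "ln (measure M B) \<le> 0" using mA by simp
  then show ?thesis using False assms(2) by (simp add: neg_log_rate_def divide_nonpos_pos)
qed

lemma iter_eq:
  assumes "is_flow X \<phi>" "y \<in> X"
  shows "(\<phi> 1 ^^ j) y = \<phi> (real j) y"
proof (induction j)
  case 0
  then show ?case using assms by (simp add: is_flow_def)
next
  case (Suc j)
  have "(\<phi> 1 ^^ Suc j) y = \<phi> 1 (\<phi> (real j) y)" using Suc by simp
  also have "\<dots> = \<phi> (1 + real j) y" using assms by (simp add: is_flow_def)
  finally show ?case by (simp add: add.commute)
qed

lemma meas_open:
  assumes "S \<subseteq> X" "\<forall>y\<in>S. \<exists>r>0. \<forall>z\<in>X. dist y z < r \<longrightarrow> z \<in> S"
  shows "S \<in> sets (restrict_space borel X)"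
proof -
  from assms(2) obtain rr where rr: "\<forall>y\<in>S. rr y > 0 \<and> (\<forall>z\<in>X. dist y z < rr y \<longrightarrow> z \<in> S)"
    by metis
  define U where "U = (\<Union>y\<in>S. ball y (rr y))"
  have "open U" unfolding U_def by auto
  have "S = X \<inter> U"
  proof
    show "S \<subseteq> X \<inter> U" using assms(1) rr unfolding U_def by force
    show "X \<inter> U \<subseteq> S" using rr unfolding U_def by (auto simp: dist_commute)
  qed
  moreover have "U \<in> sets borel" using \<open>open U\<close> by simp
  ultimately show ?thesis by (auto simp: sets_restrict_space)
qed

lemma margin:
  assumes ul: "unif_lipschitz_flow X \<phi> L" and "T > 0" and "I \<subseteq> {0..T}" and "y \<in> X"
    and K: "compact (insert 0 ((\<lambda>s. dist (\<phi> s x) (\<phi> s y)) ` I))"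
    and lt: "\<forall>s\<in>I. dist (\<phi> s x) (\<phi> s y) < \<epsilon>" and "\<epsilon> > 0"
  shows "\<exists>r>0. \<forall>z\<in>X. dist y z < r \<longrightarrow> (\<forall>s\<in>I. dist (\<phi> s x) (\<phi> s z) < \<epsilon>)"
proof -
  obtain M where M: "M \<in> insert 0 ((\<lambda>s. dist (\<phi> s x) (\<phi> s y)) ` I)"
    and Mmax: "\<forall>k\<in>insert 0 ((\<lambda>s. dist (\<phi> s x) (\<phi> s y)) ` I). k \<le> M"
    using compact_attains_sup[OF K] by blast
  have "M < \<epsilon>" using M lt \<open>\<epsilon> > 0\<close> by auto
  define \<eta> where "\<eta> = \<epsilon> - M"
  have "\<eta> > 0" using \<open>M < \<epsilon>\<close> by (simp add: \<eta>_def)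
  have LT: "L T > 0" and LL: "\<forall>e>0. \<forall>x\<in>X. \<forall>y\<in>X. dist x y \<le> e / L T \<longrightarrow>
            (\<forall>s\<in>{0..T}. dist (\<phi> s x) (\<phi> s y) < e)"
    using ul \<open>T > 0\<close> unfolding unif_lipschitz_flow_def by auto
  show ?thesis
  proof (intro exI conjI ballI impI)
    show "\<eta> / L T > 0" using \<open>\<eta> > 0\<close> LT by simp
    fix z s assume z: "z \<in> X" "dist y z < \<eta> / L T" and s: "s \<in> I"
    have "dist (\<phi> s y) (\<phi> s z) < \<eta>"
      using LL \<open>\<eta> > 0\<close> \<open>y \<in> X\<close> z s assms(3) by auto
    moreover have "dist (\<phi> s x) (\<phi> s y) \<le> M" using Mmax s by auto
    moreover have "dist (\<phi> s x) (\<phi> s z) \<le> dist (\<phi> s x) (\<phi> s y) + dist (\<phi> s y) (\<phi> s z)"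
      by (rule dist_triangle)
    ultimately show "dist (\<phi> s x) (\<phi> s z) < \<epsilon>" unfolding \<eta>_def by linarith
  qed
qed

lemma flow_ball_meas:
  assumes fl: "is_flow X \<phi>" and ul: "unif_lipschitz_flow X \<phi> L" and "x \<in> X" and "\<epsilon> > 0"
  shows "bowen_ball_flow X \<phi> t x \<epsilon> \<in> sets (restrict_space borel X)"
proof (rule meas_open)
  show "bowen_ball_flow X \<phi> t x \<epsilon> \<subseteq> X" by (auto simp: bowen_ball_flow_def)
  show "\<forall>y\<in>bowen_ball_flow X \<phi> t x \<epsilon>. \<exists>r>0. \<forall>z\<in>X. dist y z < r \<longrightarrow> z \<in> bowen_ball_flow X \<phi> t x \<epsilon>"
  proof
    fix y assume y: "y \<in> bowen_ball_flow X \<phi> t x \<epsilon>"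
    have yX: "y \<in> X" using y by (auto simp: bowen_ball_flow_def)
    have cj: "continuous_on (X \<times> UNIV) (\<lambda>(x, t). \<phi> t x)" using fl by (simp add: is_flow_def)
    have c: "continuous_on {0..t} (\<lambda>s. \<phi> s w)" if "w \<in> X" for w
      by (rule continuous_on_compose2[OF cj, of "{0..t}" "\<lambda>s. (w, s)", simplified])
         (use that in \<open>auto intro!: continuous_intros\<close>)
    have "continuous_on {0..t} (\<lambda>s. dist (\<phi> s x) (\<phi> s y))"
      by (intro continuous_on_dist c yX \<open>x \<in> X\<close>)
    then have "compact ((\<lambda>s. dist (\<phi> s x) (\<phi> s y)) ` {0..t})"
      by (intro compact_continuous_image) auto
    then have K: "compact (insert 0 ((\<lambda>s. dist (\<phi> s x) (\<phi> s y)) ` {0..t}))" by simp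
    have "\<exists>r>0. \<forall>z\<in>X. dist y z < r \<longrightarrow> (\<forall>s\<in>{0..t}. dist (\<phi> s x) (\<phi> s z) < \<epsilon>)"
      by (rule margin[OF ul _ _ yX K, of "max t 1"])
         (use y \<open>\<epsilon> > 0\<close> in \<open>auto simp: bowen_ball_flow_def\<close>)
    then show "\<exists>r>0. \<forall>z\<in>X. dist y z < r \<longrightarrow> z \<in> bowen_ball_flow X \<phi> t x \<epsilon>"
      by (auto simp: bowen_ball_flow_def)
  qed
qed

lemma map_ball_eq:
  assumes fl: "is_flow X \<phi>" and "x \<in> X"
  shows "bowen_ball_map X (\<phi> 1) n x \<epsilon> = {y\<in>X. \<forall>s\<in>real ` {..<n}. dist (\<phi> s x) (\<phi> s y) < \<epsilon>}"
  using iter_eq[OF fl] assms(2) by (auto simp: bowen_ball_map_def)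

lemma map_ball_meas:
  assumes fl: "is_flow X \<phi>" and ul: "unif_lipschitz_flow X \<phi> L" and "x \<in> X" and "\<epsilon> > 0"
  shows "bowen_ball_map X (\<phi> 1) n x \<epsilon> \<in> sets (restrict_space borel X)"
  unfolding map_ball_eq[OF fl \<open>x \<in> X\<close>]
proof (rule meas_open)
  show "\<forall>y\<in>{y \<in> X. \<forall>s\<in>real ` {..<n}. dist (\<phi> s x) (\<phi> s y) < \<epsilon>}. \<exists>r>0. \<forall>z\<in>X. dist y z < r \<longrightarrow>
     z \<in> {y \<in> X. \<forall>s\<in>real ` {..<n}. dist (\<phi> s x) (\<phi> s y) < \<epsilon>}"
  proof
    fix y assume y: "y \<in> {y \<in> X. \<forall>s\<in>real ` {..<n}. dist (\<phi> s x) (\<phi> s y) < \<epsilon>}"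
    have K: "compact (insert 0 ((\<lambda>s. dist (\<phi> s x) (\<phi> s y)) ` (real ` {..<n})))"
      by (intro finite_imp_compact) auto
    have "\<exists>r>0. \<forall>z\<in>X. dist y z < r \<longrightarrow> (\<forall>s\<in>real ` {..<n}. dist (\<phi> s x) (\<phi> s z) < \<epsilon>)"
      by (rule margin[OF ul _ _ _ K, of "max (real n) 1"])
         (use y \<open>\<epsilon> > 0\<close> in auto)
    then show "\<exists>r>0. \<forall>z\<in>X. dist y z < r \<longrightarrow> z \<in> {y \<in> X. \<forall>s\<in>real ` {..<n}. dist (\<phi> s x) (\<phi> s y) < \<epsilon>}"
      by auto
  qed
qed auto


lemma incl1:
  assumes fl: "is_flow X \<phi>" and "x \<in> X" and "real n \<le> t + 1"
  shows "bowen_ball_flow X \<phi> t x \<epsilon> \<subseteq> bowen_ball_map X (\<phi> 1) n x \<epsilon>"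
proof
  fix y assume y: "y \<in> bowen_ball_flow X \<phi> t x \<epsilon>"
  then have yX: "y \<in> X" by (simp add: bowen_ball_flow_def)
  have "dist ((\<phi> 1 ^^ j) x) ((\<phi> 1 ^^ j) y) < \<epsilon>" if "j < n" for j
  proof -
    have "real j \<in> {0..t}" using that assms(3) by auto
    then show ?thesis using y iter_eq[OF fl yX] iter_eq[OF fl \<open>x \<in> X\<close>]
      by (auto simp: bowen_ball_flow_def)
  qed
  then show "y \<in> bowen_ball_map X (\<phi> 1) n x \<epsilon>" using yX by (simp add: bowen_ball_map_def)
qed

lemma flow_in_X:
  assumes fl: "is_flow X \<phi>" and "w \<in> X" shows "\<phi> s w \<in> X"
  using fl assms(2) unfolding is_flow_def by blast

lemma incl2:
  assumes fl: "is_flow X \<phi>" and ul: "unif_lipschitz_flow X \<phi> L" and "x \<in> X"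
    and "0 < t" "t \<le> real n" and "\<epsilon> > 0"
  shows "bowen_ball_map X (\<phi> 1) n x (\<epsilon> / L 1) \<subseteq> bowen_ball_flow X \<phi> t x \<epsilon>"
proof
  fix y assume y: "y \<in> bowen_ball_map X (\<phi> 1) n x (\<epsilon> / L 1)"
  then have yX: "y \<in> X" by (simp add: bowen_ball_map_def)
  have LL: "\<forall>e>0. \<forall>x\<in>X. \<forall>y\<in>X. dist x y \<le> e / L 1 \<longrightarrow>
            (\<forall>s\<in>{0..1}. dist (\<phi> s x) (\<phi> s y) < e)"
    using ul unfolding unif_lipschitz_flow_def by (meson zero_less_one)
  have "dist (\<phi> s x) (\<phi> s y) < \<epsilon>" if s: "s \<in> {0..t}" for s
  proof -
    have n1: "n \<ge> 1" using assms(4,5) by (cases n) auto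
    define j where "j = min (nat \<lfloor>s\<rfloor>) (n - 1)"
    define r where "r = s - real j"
    have fl1: "real_of_int \<lfloor>s\<rfloor> \<le> s" "s < real_of_int \<lfloor>s\<rfloor> + 1"
      by (simp_all add: of_int_floor_le real_of_int_floor_add_one_gt)
    have "j < n" using n1 by (simp add: j_def)
    have r01: "r \<in> {0..1}"
    proof (cases "nat \<lfloor>s\<rfloor> \<le> n - 1")
      case True
      then have rj: "real j = real_of_int \<lfloor>s\<rfloor>" using s by (simp add: j_def)
      have "0 \<le> r" using rj fl1 unfolding r_def by linarith
      moreover have "r \<le> 1" using rj fl1 unfolding r_def by linarith
      ultimately show ?thesis by simp
    next
      case False
      then have "j = n - 1" by (simp add: j_def)
      moreover have "real_of_int \<lfloor>s\<rfloor> \<ge> real n" using False n1 by linarith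
      moreover have "s \<le> t" using s by simp
      moreover have "s = real n" using fl1(1) \<open>s \<le> t\<close> assms(5) \<open>real_of_int \<lfloor>s\<rfloor> \<ge> real n\<close> by linarith
      ultimately show ?thesis using n1 by (simp add: r_def of_nat_diff)
    qed
    have sx: "\<phi> s w = \<phi> r (\<phi> (real j) w)" if "w \<in> X" for w
      using fl that unfolding is_flow_def r_def by (metis diff_add_cancel)
    have "dist ((\<phi> 1 ^^ j) x) ((\<phi> 1 ^^ j) y) < \<epsilon> / L 1"
      using y \<open>j < n\<close> by (simp add: bowen_ball_map_def)
    then have "dist (\<phi> (real j) x) (\<phi> (real j) y) \<le> \<epsilon> / L 1"
      using iter_eq[OF fl yX] iter_eq[OF fl \<open>x \<in> X\<close>] by simp
    then have "dist (\<phi> r (\<phi> (real j) x)) (\<phi> r (\<phi> (real j) y)) < \<epsilon>"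
      using LL \<open>\<epsilon> > 0\<close> r01 flow_in_X[OF fl \<open>x \<in> X\<close>] flow_in_X[OF fl yX] by blast
    then show ?thesis using sx yX \<open>x \<in> X\<close> by simp
  qed
  then show "y \<in> bowen_ball_flow X \<phi> t x \<epsilon>" using yX by (simp add: bowen_ball_flow_def)
qed

theorem proposition3p1:
  fixes X :: "'a::metric_space set" and \<phi> :: "real \<Rightarrow> 'a \<Rightarrow> 'a"
    and Lf :: "real \<Rightarrow> real" and \<mu> :: "'a measure"
  assumes "compact X"
    and "is_flow X \<phi>"
    and "unif_lipschitz_flow X \<phi> Lf"
    and "prob_space \<mu>" and "space \<mu> = X" and "sets \<mu> = sets (restrict_space borel X)"
    and "\<epsilon> > 0" and "x \<in> X"
  shows "upper_BK_map X \<mu> (\<phi> 1) x \<epsilon> \<le> upper_BK_flow X \<mu> \<phi> x \<epsilon> \<and>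
         upper_BK_flow X \<mu> \<phi> x \<epsilon> \<le> upper_BK_map X \<mu> (\<phi> 1) x (\<epsilon> / Lf 1) \<and>
         lower_BK_map X \<mu> (\<phi> 1) x \<epsilon> \<le> lower_BK_flow X \<mu> \<phi> x \<epsilon> \<and>
         lower_BK_flow X \<mu> \<phi> x \<epsilon> \<le> lower_BK_map X \<mu> (\<phi> 1) x (\<epsilon> / Lf 1)"

proof -
  note fl = assms(2) and ul = assms(3) and ps = assms(4) and xX = assms(8) and ep = assms(7)
  have Lpos: "Lf 1 > 0" using ul unfolding unif_lipschitz_flow_def by simp
  have ep': "\<epsilon> / Lf 1 > 0" using ep Lpos by simp
  have sets: "sets \<mu> = sets (restrict_space borel X)" by fact
  have FM: "bowen_ball_flow X \<phi> t x e \<in> sets \<mu>" if "e > 0" for t e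
    using flow_ball_meas[OF fl ul xX that] sets by simp
  have MM: "bowen_ball_map X (\<phi> 1) n x e \<in> sets \<mu>" if "e > 0" for n e
    using map_ball_meas[OF fl ul xX that] sets by simp
  define g where "g = (\<lambda>t::real. neg_log_rate \<mu> (bowen_ball_flow X \<phi> t x \<epsilon>) t)"
  define a where "a = (\<lambda>n::nat. neg_log_rate \<mu> (bowen_ball_map X (\<phi> 1) n x \<epsilon>) (real n))"
  define a' where "a' = (\<lambda>n::nat. neg_log_rate \<mu> (bowen_ball_map X (\<phi> 1) n x (\<epsilon> / Lf 1)) (real n))"
  have uf: "upper_BK_flow X \<mu> \<phi> x \<epsilon> = Limsup at_top g" by (simp add: upper_BK_flow_def g_def)
  have lf: "lower_BK_flow X \<mu> \<phi> x \<epsilon> = Liminf at_top g" by (simp add: lower_BK_flow_def g_def)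
  have um: "upper_BK_map X \<mu> (\<phi> 1) x \<epsilon> = Limsup sequentially a" by (simp add: upper_BK_map_def a_def)
  have lm: "lower_BK_map X \<mu> (\<phi> 1) x \<epsilon> = Liminf sequentially a" by (simp add: lower_BK_map_def a_def)
  have um': "upper_BK_map X \<mu> (\<phi> 1) x (\<epsilon> / Lf 1) = Limsup sequentially a'"
    by (simp add: upper_BK_map_def a'_def)
  have lm': "lower_BK_map X \<mu> (\<phi> 1) x (\<epsilon> / Lf 1) = Liminf sequentially a'"
    by (simp add: lower_BK_map_def a'_def)
  have P1: "Limsup sequentially a \<le> Limsup at_top g"
  proof -
    have "eventually (\<lambda>n. a n \<le> g (real n)) sequentially"
      using eventually_ge_at_top[of "1::nat"]
    proof (rule eventually_mono)
      fix n :: nat assume "1 \<le> n"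
      then show "a n \<le> g (real n)" unfolding a_def g_def
        by (intro nlr_mono[OF ps incl1[OF fl xX] MM[OF ep]]) auto
    qed
    then have "Limsup sequentially a \<le> Limsup sequentially (\<lambda>n. g (real n))"
      by (rule Limsup_mono)
    also have "\<dots> = Limsup (filtermap real sequentially) g"
      by (rule Limsup_filtermap_eq[symmetric]) (simp add: inj_def)
    also have "\<dots> \<le> Limsup at_top g" by (rule Limsup_filter_mono[OF filtermap_real_le])
    finally show ?thesis .
  qed
  have P4: "Liminf at_top g \<le> Liminf sequentially a'"
  proof -
    have "Liminf at_top g \<le> Liminf (filtermap real sequentially) g"
      by (rule Liminf_filter_mono[OF filtermap_real_le])
    also have "\<dots> = Liminf sequentially (\<lambda>n. g (real n))"
      by (rule Liminf_filtermap_eq) (simp add: inj_def)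
    also have "\<dots> \<le> Liminf sequentially a'"
    proof (rule Liminf_mono)
      show "eventually (\<lambda>n. g (real n) \<le> a' n) sequentially"
        using eventually_ge_at_top[of "1::nat"]
      proof (rule eventually_mono)
        fix n :: nat assume "1 \<le> n"
        then show "g (real n) \<le> a' n" unfolding a'_def g_def
          by (intro nlr_mono[OF ps incl2[OF fl ul xX _ _ ep] FM[OF ep]]) auto
      qed
    qed
    finally show ?thesis .
  qed
  have P3: "Liminf sequentially a \<le> Liminf at_top g"
  proof -
    define m where "m = (\<lambda>t::real. nat \<lfloor>t\<rfloor> + 1)"
    have "filtermap m at_top \<le> sequentially" using f1 unfolding filterlim_def m_def .
    then have "Liminf sequentially a \<le> Liminf (filtermap m at_top) a"
      by (rule Liminf_filter_mono)
    also have "\<dots> \<le> Liminf at_top (\<lambda>t. a (m t))" by (rule Liminf_filtermap_le)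
    also have "\<dots> \<le> Liminf at_top g"
    proof (rule Liminf_mono)
      show "eventually (\<lambda>t. a (m t) \<le> g t) at_top"
        using eventually_ge_at_top[of "1::real"]
      proof (rule eventually_mono)
        fix t :: real assume t1: "1 \<le> t"
        have fl1: "real_of_int \<lfloor>t\<rfloor> \<le> t" "t < real_of_int \<lfloor>t\<rfloor> + 1"
          by (simp_all add: of_int_floor_le real_of_int_floor_add_one_gt)
        have rm: "real (m t) = real_of_int \<lfloor>t\<rfloor> + 1" using t1 by (simp add: m_def)
        show "a (m t) \<le> g t" unfolding a_def g_def
          by (rule nlr_mono[OF ps incl1[OF fl xX] MM[OF ep]]) (use rm fl1 t1 in auto)
      qed
    qed
    finally show ?thesis .
  qed
  have P2: "Limsup at_top g \<le> Limsup sequentially a'"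
  proof -
    define n where "n = (\<lambda>t::real. nat \<lceil>t\<rceil>)"
    define h where "h = (\<lambda>t. neg_log_rate \<mu> (bowen_ball_map X (\<phi> 1) (n t) x (\<epsilon> / Lf 1)) t)"
    have "Limsup at_top g \<le> Limsup at_top h"
    proof (rule Limsup_mono)
      show "eventually (\<lambda>t. g t \<le> h t) at_top"
        using eventually_gt_at_top[of "0::real"]
      proof (rule eventually_mono)
        fix t :: real assume t0: "0 < t"
        have "t \<le> real (n t)" unfolding n_def by linarith
        then show "g t \<le> h t" unfolding h_def g_def
          by (intro nlr_mono[OF ps incl2[OF fl ul xX t0 _ ep] FM[OF ep]]) (use t0 in auto)
      qed
    qed
    also have "Limsup at_top h \<le> Limsup sequentially a'"
      unfolding Limsup_le_iff
    proof (intro allI impI)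
      fix y assume y: "Limsup sequentially a' < y"
      have "eventually (\<lambda>k. 0 \<le> a' k) sequentially"
        using eventually_ge_at_top[of "1::nat"]
      proof (rule eventually_mono)
        fix k :: nat assume "1 \<le> k"
        then show "0 \<le> a' k" unfolding a'_def by (intro nlr_nonneg[OF ps]) auto
      qed
      then have A0: "0 \<le> Limsup sequentially a'"
        by (intro le_Limsup) auto
      obtain c where c1: "Limsup sequentially a' < ereal c" and c2: "ereal c < y"
        using ereal_dense2[OF y] by blast
      obtain d where d1: "ereal c < ereal d" and d2: "ereal d < y"
        using ereal_dense2[OF c2] by blast
      have "0 < ereal c" using A0 c1 by (rule order.strict_trans1)
      then have cpos: "c > 0" by simp
      have cd: "c < d" using d1 by simp
      have ev1: "eventually (\<lambda>k. a' k < ereal c) sequentially" by (rule Limsup_lessD[OF c1])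
      have ev2: "eventually (\<lambda>t. a' (n t) < ereal c) at_top"
        using f2 ev1 unfolding filterlim_iff n_def by blast
      have ev3: "eventually (\<lambda>t. t > max 1 (c / (d - c))) at_top" by (rule eventually_gt_at_top)
      show "eventually (\<lambda>t. h t < y) at_top"
        using ev2 ev3
      proof (rule eventually_elim2)
        fix t assume at: "a' (n t) < ereal c" and t: "t > max 1 (c / (d - c))"
        let ?B = "bowen_ball_map X (\<phi> 1) (n t) x (\<epsilon> / Lf 1)"
        have t1: "t > 1" using t by simp
        have "c / (d - c) < t" using t by simp
        then have tdc: "c < (d - c) * t" using cd by (simp add: pos_divide_less_eq mult.commute)
        have nt: "real (n t) < t + 1" "0 < real (n t)" unfolding n_def using t1 by linarith+
        have m0: "measure \<mu> ?B \<noteq> 0" using at by (auto simp: a'_def neg_log_rate_def)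
        then have "- ln (measure \<mu> ?B) / real (n t) < c" using at by (simp add: a'_def neg_log_rate_def)
        then have "- ln (measure \<mu> ?B) < c * real (n t)" using nt(2) by (metis pos_divide_less_eq)
        also have "\<dots> \<le> c * (t + 1)" using nt cpos by simp
        also have "\<dots> < d * t" using tdc by (simp add: algebra_simps)
        finally have "- ln (measure \<mu> ?B) < d * t" .
        then have "- ln (measure \<mu> ?B) / t < d" using t1
          by (metis pos_divide_less_eq zero_less_one order.strict_trans)
        then have "h t < ereal d" using m0 by (simp add: h_def neg_log_rate_def)
        then show "h t < y" using d2 by simp
      qed
    qed
    finally show ?thesis .
  qed
  show ?thesis using P1 P2 P3 P4 uf lf um lm um' lm' by simp
qed

end
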